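(* Let $m$ be a positive integer, $r\in[0,1)$, $\eta\in(0,1)$, and let $K$ be a distribution function supported on $[0,\infty)$ with finite $m$-th moment. Let $h$ be smoothly varying of order $m+r$ (of some index). Then for every $t>0$ such that $h$ is $m$ times differentiable on $[(1-\eta)t,\infty)$ with $h^{(m)}$ nonvanishing there, $$|(\mathsf T_{K,\eta}-\mathsf L_{K,m})h|(t)\le\sum_{j=0}^m\frac{|h^{(j)}(t)|}{j!}\int_{\eta t}^\infty x^j\,dK(x)+\frac{|h^{(m)}(t)|}{t^r\,m!}\int_0^{\eta t}\overline\Delta^r_{t,x/t}(h^{(m)})\,x^{m+r}\,dK(x).$$
   Context: $\mathsf T_{K,\eta}h(t)=\int_{-\infty}^{\eta t}h(t-x)\,dK(x)$. $\mu_{K,j}=\int x^j\,dK(x)$ and $\mathsf L_{K,m}h=\sum_{j=0}^m\frac{(-1)^j}{j!}\mu_{K,j}h^{(j)}$. For $g(t)\ne0$, $x\ne0$: $\Delta^r_{t,x}g=\mathrm{sign}(x)\frac{g(t(1-x))-g(t)}{|x|^rg(t)}$, and $\overline\Delta^r_{\tau,\delta}(g)=\sup_{t\ge\tau}\sup_{0<|x|\le\delta}|\Delta^r_{t,x}g|$. A function $h$ is smoothly varying of index $-\beta$ and order $s=m+r$ ($m\ge1$ integer, $r\in[0,1)$) if it is ultimately $m$ times continuously differentiable, $|h^{(m)}|$ is regularly varying of index $-\beta-m$, and $\lim_{\delta\to0}\limsup_{t\to\infty}\sup_{0<|x|\le\delta}|\Delta^r_{t,x}h^{(m)}|=0$.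 *)

theory Defs
  imports "HOL-Analysis.Analysis"
begin

text \<open>Distribution function supported on [0,infinity): nondecreasing, right-continuous,
  zero on the negative half-line, tending to 1 at infinity. dK is the
  Lebesgue-Stieltjes measure interval_measure K.\<close>
definition distr_fun_nonneg :: "(real \<Rightarrow> real) \<Rightarrow> bool" where
  "distr_fun_nonneg K \<longleftrightarrow> mono K \<and> (\<forall>x. continuous (at_right x) K)
     \<and> (\<forall>x<0. K x = 0) \<and> (K \<longlongrightarrow> 1) at_top"

abbreviation hderiv :: "nat \<Rightarrow> (real \<Rightarrow> real) \<Rightarrow> real \<Rightarrow> real" where
  "hderiv j h \<equiv> (deriv ^^ j) h"

definition T_op :: "(real \<Rightarrow> real) \<Rightarrow> real \<Rightarrow> (real \<Rightarrow> real) \<Rightarrow> real \<Rightarrow> real" where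
  "T_op K \<eta> h t = (LINT x:{..\<eta> * t}|interval_measure K. h (t - x))"

definition moment :: "(real \<Rightarrow> real) \<Rightarrow> nat \<Rightarrow> real" where
  "moment K j = (LINT x|interval_measure K. x ^ j)"

definition L_op :: "(real \<Rightarrow> real) \<Rightarrow> nat \<Rightarrow> (real \<Rightarrow> real) \<Rightarrow> real \<Rightarrow> real" where
  "L_op K m h t = (\<Sum>j\<le>m. (-1) ^ j / fact j * moment K j * hderiv j h t)"

definition Delta :: "real \<Rightarrow> real \<Rightarrow> real \<Rightarrow> (real \<Rightarrow> real) \<Rightarrow> real" where
  "Delta r t x g = sgn x * (g (t * (1 - x)) - g t) / (\<bar>x\<bar> powr r * g t)"

definition Deltabar :: "real \<Rightarrow> real \<Rightarrow> real \<Rightarrow> (real \<Rightarrow> real) \<Rightarrow> ennreal" where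
  "Deltabar r \<tau> \<delta> g = (SUP s\<in>{\<tau>..}. SUP x\<in>{x. 0 < \<bar>x\<bar> \<and> \<bar>x\<bar> \<le> \<delta>}.
       ennreal \<bar>Delta r s x g\<bar>)"

definition regularly_varying :: "real \<Rightarrow> (real \<Rightarrow> real) \<Rightarrow> bool" where
  "regularly_varying \<rho> f \<longleftrightarrow> (\<forall>\<^sub>F x in at_top. f x > 0) \<and>
     (\<forall>c>0. ((\<lambda>x. f (c * x) / f x) \<longlongrightarrow> c powr \<rho>) at_top)"

definition smoothly_varying :: "real \<Rightarrow> nat \<Rightarrow> real \<Rightarrow> (real \<Rightarrow> real) \<Rightarrow> bool" where
  "smoothly_varying \<beta> m r h \<longleftrightarrow>
     (\<exists>x0. (\<forall>j<m. \<forall>x\<ge>x0. (hderiv j h has_real_derivative hderiv (Suc j) h x) (at x))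
           \<and> continuous_on {x0..} (hderiv m h))
   \<and> regularly_varying (- \<beta> - real m) (\<lambda>x. \<bar>hderiv m h x\<bar>)
   \<and> ((\<lambda>\<delta>. Limsup at_top (\<lambda>t. SUP x\<in>{x. 0 < \<bar>x\<bar> \<and> \<bar>x\<bar> \<le> \<delta>}.
          ereal \<bar>Delta r t x (hderiv m h)\<bar>)) \<longlongrightarrow> 0) (at_right 0)"

end

theory Submission imports Defs begin

lemma aux_pm: "(-1::real) ^ j / F * H * y ^ j = H / F * (- y) ^ j"
proof -
  have "(- y) ^ j = ((-1) * y) ^ j" by simp
  also have "\<dots> = (-1) ^ j * y ^ j" by (rule power_mult_distrib)
  finally show ?thesis by simp
qed

lemma taylor_bound:
  fixes h :: "real \<Rightarrow> real" and m :: nat and r \<eta> t y :: real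
  assumes m: "m \<ge> 1" and r: "0 \<le> r" and t: "0 < t" and y: "0 < y" "y \<le> \<eta> * t"
    and der: "\<forall>j<m. \<forall>x\<ge>(1 - \<eta>) * t.
           (hderiv j h has_real_derivative hderiv (Suc j) h x) (at x)"
    and nz: "hderiv m h t \<noteq> 0"
  shows "ennreal \<bar>h (t - y) - (\<Sum>j\<le>m. (-1) ^ j / fact j * hderiv j h t * y ^ j)\<bar>
     \<le> ennreal (\<bar>hderiv m h t\<bar> / (t powr r * fact m)) *
        (Deltabar r t (y / t) (hderiv m h) * ennreal (y powr (real m + r)))"
proof -
  define D where "D = hderiv m h"
  have "\<exists>\<xi>. (if t - y < t then t - y < \<xi> \<and> \<xi> < t else t < \<xi> \<and> \<xi> < t - y) \<and>
    h (t - y) = (\<Sum>j<m. (hderiv j h t / fact j) * ((t - y) - t)^j) + (hderiv m h \<xi> / fact m) * ((t - y) - t)^m"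
    apply (rule Taylor[where diff = "\<lambda>j. hderiv j h" and a = "t - y" and b = t])
  proof -
    show "0 < m" using m by simp
    show "(\<lambda>j. hderiv j h) 0 = h" by simp
    show "\<forall>ma ta. ma < m \<and> t - y \<le> ta \<and> ta \<le> t \<longrightarrow> ((\<lambda>j. hderiv j h) ma has_real_derivative (\<lambda>j. hderiv j h) (Suc ma) ta) (at ta)"
    proof (intro allI impI)
      fix ma ta assume a: "ma < m \<and> t - y \<le> ta \<and> ta \<le> t"
      have "(1 - \<eta>) * t \<le> ta" using a y by (simp add: algebra_simps)
      then show "((\<lambda>j. hderiv j h) ma has_real_derivative (\<lambda>j. hderiv j h) (Suc ma) ta) (at ta)"
        using der a by simp
    qed
  qed (use y in auto)
  then obtain \<xi> where xi: "t - y < \<xi>" "\<xi> < t"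
    and tay: "h (t - y) = (\<Sum>j<m. (hderiv j h t / fact j) * (- y)^j) + (D \<xi> / fact m) * (- y)^m"
    using y by (auto simp: D_def)
  have sum_eq: "(\<Sum>j\<le>m. (-1) ^ j / fact j * hderiv j h t * y ^ j)
      = (\<Sum>j<m. (hderiv j h t / fact j) * (- y)^j) + (D t / fact m) * (- y)^m"
  proof -
    have split: "(\<Sum>j\<le>m. (-1) ^ j / fact j * hderiv j h t * y ^ j)
        = (\<Sum>j<m. (-1) ^ j / fact j * hderiv j h t * y ^ j) + (-1) ^ m / fact m * hderiv m h t * y ^ m"
      by (simp only: lessThan_Suc_atMost[symmetric] sum.lessThan_Suc)
    have trm: "\<And>j. (-1::real) ^ j / fact j * hderiv j h t * y ^ j = hderiv j h t / fact j * (- y)^j"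
      by (rule aux_pm)
    show ?thesis unfolding D_def using split by (simp only: trm)
  qed
  have diff_eq: "h (t - y) - (\<Sum>j\<le>m. (-1) ^ j / fact j * hderiv j h t * y ^ j)
       = (D \<xi> - D t) / fact m * (- y)^m"
    unfolding sum_eq tay by (simp add: field_simps)
  define z where "z = (t - \<xi>) / t"
  have z: "0 < z" "z \<le> y / t" using xi t by (auto simp: z_def divide_simps)
  have tz: "t * (1 - z) = \<xi>" using t by (simp add: z_def field_simps)
  have Dt: "D t \<noteq> 0" using nz by (simp add: D_def)
  have Delta_abs: "\<bar>Delta r t z D\<bar> = \<bar>D \<xi> - D t\<bar> / (z powr r * \<bar>D t\<bar>)"
    unfolding Delta_def tz using z by (simp add: abs_mult)
  have zr: "z powr r > 0" using z by simp
  have abs_diff: "\<bar>D \<xi> - D t\<bar> = \<bar>Delta r t z D\<bar> * z powr r * \<bar>D t\<bar>"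
    unfolding Delta_abs using zr Dt by (simp add: field_simps)
  have zr_le: "z powr r \<le> y powr r / t powr r"
    using z r t by (metis powr_divide powr_mono2 less_eq_real_def y(1) less_imp_le)
  have ypow: "y powr (real m + r) = y ^ m * y powr r"
    using y by (simp add: powr_add powr_realpow)
  have real_ineq: "\<bar>h (t - y) - (\<Sum>j\<le>m. (-1) ^ j / fact j * hderiv j h t * y ^ j)\<bar>
      \<le> (\<bar>D t\<bar> / (t powr r * fact m)) * (\<bar>Delta r t z D\<bar> * y powr (real m + r))"
  proof -
    have "\<bar>h (t - y) - (\<Sum>j\<le>m. (-1) ^ j / fact j * hderiv j h t * y ^ j)\<bar>
        = \<bar>Delta r t z D\<bar> * z powr r * \<bar>D t\<bar> / fact m * y ^ m"
      unfolding diff_eq abs_diff[symmetric] using y by (simp add: abs_mult power_abs)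
    also have "\<dots> \<le> \<bar>Delta r t z D\<bar> * (y powr r / t powr r) * \<bar>D t\<bar> / fact m * y ^ m"
      using y by (intro divide_right_mono mult_right_mono mult_left_mono zr_le) auto
    also have "\<dots> = (\<bar>D t\<bar> / (t powr r * fact m)) * (\<bar>Delta r t z D\<bar> * y powr (real m + r))"
      unfolding ypow by (simp add: field_simps)
    finally show ?thesis .
  qed
  have "ennreal \<bar>Delta r t z D\<bar> \<le> Deltabar r t (y / t) D"
    unfolding Deltabar_def
    by (rule SUP_upper2[of t], simp, rule SUP_upper2[of z]) (use z in auto)
  then have "ennreal (\<bar>D t\<bar> / (t powr r * fact m)) * (ennreal \<bar>Delta r t z D\<bar> * ennreal (y powr (real m + r)))
     \<le> ennreal (\<bar>D t\<bar> / (t powr r * fact m)) * (Deltabar r t (y / t) D * ennreal (y powr (real m + r)))"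
    by (intro mult_left_mono mult_right_mono) auto
  moreover have "ennreal \<bar>h (t - y) - (\<Sum>j\<le>m. (-1) ^ j / fact j * hderiv j h t * y ^ j)\<bar>
     \<le> ennreal (\<bar>D t\<bar> / (t powr r * fact m)) * (ennreal \<bar>Delta r t z D\<bar> * ennreal (y powr (real m + r)))"
    using real_ineq t by (simp add: ennreal_mult[symmetric] ennreal_leI)
  ultimately show ?thesis unfolding D_def by (rule order_trans[rotated])
qed


lemma mono_ennreal_measurable:
  fixes g :: "real \<Rightarrow> ennreal"
  assumes "mono g"
  shows "g \<in> borel_measurable borel"
proof (rule borel_measurableI_less)
  fix c
  have "is_interval {x. g x < c}"
    unfolding is_interval_1
  proof (intro ballI allI impI, elim conjE)
    fix a b x assume "a \<in> {x. g x < c}" "b \<in> {x. g x < c}" "a \<le> x" "x \<le> b"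
    then show "x \<in> {x. g x < c}" using assms by (auto dest: monoD intro: le_less_trans)
  qed
  then show "{x \<in> space borel. g x < c} \<in> sets borel"
    by (simp add: real_interval_borel_measurable)
qed

lemma distr_Ioc:
  assumes "distr_fun_nonneg K" "u \<le> v"
  shows "emeasure (interval_measure K) {u<..v} = ennreal (K v - K u)"
  using assms unfolding distr_fun_nonneg_def
  by (intro emeasure_interval_measure_Ioc) (auto dest: monoD)

lemma distr_Ioc_finite:
  assumes "distr_fun_nonneg K"
  shows "emeasure (interval_measure K) {u<..v} < \<infinity>"
proof (cases "u \<le> v")
  case True then show ?thesis using distr_Ioc[OF assms True] by simp
next
  case False then have "{u<..v} = {}" by auto
  then show ?thesis by simp
qed

lemma distr_neg_null:
  assumes "distr_fun_nonneg K"
  shows "AE x in interval_measure K. 0 \<le> x"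
proof -
  let ?M = "interval_measure K"
  define N where "N n = {- (real n + 1)<..- (1 / (real n + 1))}" for n
  have K0: "K x = 0" if "x < 0" for x using assms that unfolding distr_fun_nonneg_def by auto
  have "N n \<in> null_sets ?M" for n
  proof -
    have le: "- (real n + 1) \<le> - (1 / (real n + 1))"
      by (simp add: field_simps)
    have "emeasure ?M (N n) = 0"
      unfolding N_def using distr_Ioc[OF assms le] K0
      by (simp add: K0)
    then show ?thesis by (auto simp: null_sets_def N_def)
  qed
  then have "(\<Union>n. N n) \<in> null_sets ?M" by blast
  moreover have "{x \<in> space ?M. \<not> 0 \<le> x} \<subseteq> (\<Union>n. N n)"
  proof
    fix x assume "x \<in> {x \<in> space ?M. \<not> 0 \<le> x}"
    then have x: "x < 0" by auto
    obtain n :: nat where n: "max (- x) (- 1 / x) < real n" using reals_Archimedean2 by blast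
    have "- (real n + 1) < x" using n by auto
    moreover have "x \<le> - (1 / (real n + 1))"
    proof -
      have "- 1 / x < real n + 1" using n by auto
      then have "(real n + 1) * x < (- 1 / x) * x" using x by (rule mult_strict_right_mono_neg)
      then have "- 1 > x * (real n + 1)" using x by (simp add: mult.commute)
      then show ?thesis by (simp add: field_simps)
    qed
    ultimately show "x \<in> (\<Union>n. N n)" unfolding N_def by auto
  qed
  ultimately show ?thesis by (rule AE_I')
qed


theorem theorem5p4p1:
  fixes m :: nat and r \<eta> \<beta> t :: real and K h :: "real \<Rightarrow> real"
  assumes "m \<ge> 1" and "0 \<le> r" and "r < 1" and "0 < \<eta>" and "\<eta> < 1"
    and "distr_fun_nonneg K"
    and "integrable (interval_measure K) (\<lambda>x. x ^ m)"
    and "smoothly_varying \<beta> m r h"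
    and "0 < t"
    and "\<forall>j<m. \<forall>x\<ge>(1 - \<eta>) * t.
           (hderiv j h has_real_derivative hderiv (Suc j) h x) (at x)"
    and "\<forall>x\<ge>(1 - \<eta>) * t. hderiv m h x \<noteq> 0"
  shows "ennreal \<bar>T_op K \<eta> h t - L_op K m h t\<bar>
    \<le> (\<Sum>j\<le>m. ennreal (\<bar>hderiv j h t\<bar> / fact j) *
          (\<integral>\<^sup>+ x\<in>{\<eta> * t<..}. ennreal (x ^ j) \<partial>interval_measure K))
      + ennreal (\<bar>hderiv m h t\<bar> / (t powr r * fact m)) *
          (\<integral>\<^sup>+ x\<in>{0<..\<eta> * t}. Deltabar r t (x / t) (hderiv m h) * ennreal (x powr (real m + r))
             \<partial>interval_measure K)"
proof -
  let ?M = "interval_measure K"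
  define a where "a = \<eta> * t"
  have a0: "0 < a" using assms by (simp add: a_def)
  define D where "D = hderiv m h"
  define c where "c j = (-1) ^ j / fact j * hderiv j h t" for j
  define R where "R x = h (t - x) - (\<Sum>j\<le>m. c j * x ^ j)" for x
  define C where "C = \<bar>hderiv m h t\<bar> / (t powr r * fact m)"
  define G where "G x = Deltabar r t (x / t) D * ennreal (x powr (real m + r))" for x
  have dK: "distr_fun_nonneg K" using assms by simp
  have AEpos: "AE x in ?M. 0 \<le> x" by (rule distr_neg_null[OF dK])
  have fin: "emeasure ?M {u<..v} < \<infinity>" for u v by (rule distr_Ioc_finite[OF dK])

  have intpow: "integrable ?M (\<lambda>x. x ^ j)" if "j \<le> m" for j
  proof (rule Bochner_Integration.integrable_bound[where f="\<lambda>x. \<bar>x ^ m\<bar> + (indicator {-1<..1} x :: real)"])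
    show "integrable ?M (\<lambda>x. \<bar>x ^ m\<bar> + (indicator {-1<..1} x :: real))"
      using assms(7) fin by (intro Bochner_Integration.integrable_add Bochner_Integration.integrable_abs) (auto simp: integrable_indicator_iff)
    show "(\<lambda>x. x ^ j) \<in> borel_measurable ?M" by simp
    show "AE x in ?M. norm (x ^ j) \<le> norm (\<bar>x ^ m\<bar> + (indicator {-1<..1} x :: real))"
    proof (rule AE_I2)
      fix x :: real
      have "\<bar>x\<bar> ^ j \<le> \<bar>x\<bar> ^ m + (indicator {-1<..1} x :: real)"
      proof (cases "1 \<le> \<bar>x\<bar>")
        case True
        then have "\<bar>x\<bar> ^ j \<le> \<bar>x\<bar> ^ m" using \<open>j \<le> m\<close> by (rule power_increasing[rotated])
        then show ?thesis by (simp add: indicator_def)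
      next
        case False
        then have "x \<in> {-1<..1}" by auto
        moreover have "\<bar>x\<bar> ^ j \<le> 1" using False by (simp add: power_le_one)
        then have "\<bar>x\<bar> ^ j \<le> \<bar>x\<bar> ^ m + 1" using zero_le_power[OF abs_ge_zero[of x], of m] by linarith
        ultimately show ?thesis by simp
      qed
      then show "norm (x ^ j) \<le> norm (\<bar>x ^ m\<bar> + (indicator {-1<..1} x :: real))"
        by (simp add: power_abs indicator_def)
    qed
  qed

  have hcont: "continuous_on {..a} (\<lambda>x. h (t - x))"
  proof (intro continuous_at_imp_continuous_on ballI)
    fix x assume "x \<in> {..a}"
    then have le: "(1 - \<eta>) * t \<le> t - x" by (simp add: a_def algebra_simps)
    have "(hderiv 0 h has_real_derivative hderiv (Suc 0) h (t - x)) (at (t - x))"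
      using assms(10)[rule_format, of 0 "t - x"] assms(1) le by simp
    then have "(h has_real_derivative hderiv (Suc 0) h (t - x)) (at (t - x))" by simp
    then have hc: "isCont h (t - x)" by (rule DERIV_isCont)
    have c1: "isCont (\<lambda>x. t - x) x" by (intro continuous_intros)
    show "isCont (\<lambda>x. h (t - x)) x" using isCont_o2[OF c1, of h] hc by simp
  qed
  have "compact ((\<lambda>x. h (t - x)) ` {0..a})"
    by (rule compact_continuous_image[OF continuous_on_subset[OF hcont]]) auto
  then obtain B where B: "B > 0" "\<And>x. x \<in> {0..a} \<Longrightarrow> \<bar>h (t - x)\<bar> \<le> B"
    using compact_imp_bounded bounded_pos by (metis image_eqI real_norm_def)
  have intT: "integrable ?M (\<lambda>x. indicator {..a} x * h (t - x))"
  proof (rule Bochner_Integration.integrable_bound[where f = "\<lambda>x. B * (indicator {-1<..a} x :: real)"])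
    show "integrable ?M (\<lambda>x. B * (indicator {-1<..a} x :: real))"
      using fin by (intro Bochner_Integration.integrable_mult_right) (auto simp: integrable_indicator_iff)
    have "(\<lambda>x. indicator {..a} x *\<^sub>R h (t - x)) \<in> borel_measurable borel"
      by (rule borel_measurable_continuous_on_indicator[OF _ hcont]) simp
    then show "(\<lambda>x. indicator {..a} x * h (t - x)) \<in> borel_measurable ?M"
      by (simp add: measurable_cong_sets[OF sets_interval_measure refl])
    show "AE x in ?M. norm (indicator {..a} x * h (t - x)) \<le> norm (B * (indicator {-1<..a} x :: real))"
      using AEpos
    proof (rule AE_mp, intro AE_I2 impI)
      fix x :: real assume "0 \<le> x"
      then show "norm (indicator {..a} x * h (t - x)) \<le> norm (B * (indicator {-1<..a} x :: real))"
        using B by (auto simp: indicator_def)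
    qed
  qed
  have intPin: "integrable ?M (\<lambda>x. indicator {..a} x * x ^ j)" if "j \<le> m" for j
    using integrable_mult_indicator[OF _ intpow[OF that], of "{..a}"] by simp
  have intPout: "integrable ?M (\<lambda>x. indicator {a<..} x * x ^ j)" if "j \<le> m" for j
    using integrable_mult_indicator[OF _ intpow[OF that], of "{a<..}"] by simp
  define Pin where "Pin j = integral\<^sup>L ?M (\<lambda>x. indicator {..a} x * x ^ j)" for j
  define Pout where "Pout j = integral\<^sup>L ?M (\<lambda>x. indicator {a<..} x * x ^ j)" for j
  have mom: "moment K j = Pin j + Pout j" if "j \<le> m" for j
  proof -
    have "(\<lambda>x. x ^ j) = (\<lambda>x. indicator {..a} x * x ^ j + indicator {a<..} x * x ^ j)"
      by (auto simp: indicator_def fun_eq_iff)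
    then have "moment K j = integral\<^sup>L ?M (\<lambda>x. indicator {..a} x * x ^ j + indicator {a<..} x * x ^ j)"
      unfolding moment_def by metis
    also have "\<dots> = Pin j + Pout j"
      unfolding Pin_def Pout_def using intPin[OF that] intPout[OF that] by (rule Bochner_Integration.integral_add)
    finally show ?thesis .
  qed
  have Teq: "T_op K \<eta> h t = integral\<^sup>L ?M (\<lambda>x. indicator {..a} x * h (t - x))"
    by (simp add: T_op_def set_lebesgue_integral_def a_def)
  have Rexp: "(\<lambda>x. indicator {..a} x * R x)
      = (\<lambda>x. indicator {..a} x * h (t - x) - (\<Sum>j\<le>m. c j * (indicator {..a} x * x ^ j)))"
    by (auto simp: R_def fun_eq_iff sum_distrib_left right_diff_distrib mult_ac)
  have intR: "integrable ?M (\<lambda>x. indicator {..a} x * R x)"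
    unfolding Rexp using intT intPin by (intro Bochner_Integration.integrable_diff Bochner_Integration.integrable_sum Bochner_Integration.integrable_mult_right) auto
  define IR where "IR = integral\<^sup>L ?M (\<lambda>x. indicator {..a} x * R x)"
  have IReq: "IR = T_op K \<eta> h t - (\<Sum>j\<le>m. c j * Pin j)"
  proof -
    have "IR = integral\<^sup>L ?M (\<lambda>x. indicator {..a} x * h (t - x)) -
         integral\<^sup>L ?M (\<lambda>x. \<Sum>j\<le>m. c j * (indicator {..a} x * x ^ j))"
      unfolding IR_def Rexp using intT intPin
      by (intro Bochner_Integration.integral_diff Bochner_Integration.integrable_sum Bochner_Integration.integrable_mult_right) auto
    also have "integral\<^sup>L ?M (\<lambda>x. \<Sum>j\<le>m. c j * (indicator {..a} x * x ^ j)) = (\<Sum>j\<le>m. c j * Pin j)"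
      unfolding Pin_def using intPin
      by (subst Bochner_Integration.integral_sum) (auto intro!: Bochner_Integration.integrable_mult_right)
    finally show ?thesis using Teq by simp
  qed
  have Leq: "L_op K m h t = (\<Sum>j\<le>m. c j * (Pin j + Pout j))"
    unfolding L_op_def c_def using mom by (intro sum.cong) auto
  have TLeq: "T_op K \<eta> h t - L_op K m h t = IR - (\<Sum>j\<le>m. c j * Pout j)"
    unfolding Leq IReq by (simp add: distrib_left sum.distrib)
  have Pout_nn: "0 \<le> Pout j" for j
    unfolding Pout_def using a0 by (intro Bochner_Integration.integral_nonneg) (auto simp: indicator_def)
  have abs_c: "\<bar>c j\<bar> = \<bar>hderiv j h t\<bar> / fact j" for j
    by (simp add: c_def abs_mult power_abs)
  have real_bd: "\<bar>T_op K \<eta> h t - L_op K m h t\<bar> \<le> \<bar>IR\<bar> + (\<Sum>j\<le>m. \<bar>hderiv j h t\<bar> / fact j * Pout j)"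
  proof -
    have "\<bar>T_op K \<eta> h t - L_op K m h t\<bar> \<le> \<bar>IR\<bar> + \<bar>\<Sum>j\<le>m. c j * Pout j\<bar>"
      unfolding TLeq by (rule abs_triangle_ineq4)
    also have "\<bar>\<Sum>j\<le>m. c j * Pout j\<bar> \<le> (\<Sum>j\<le>m. \<bar>c j * Pout j\<bar>)" by (rule sum_abs)
    also have "\<dots> = (\<Sum>j\<le>m. \<bar>hderiv j h t\<bar> / fact j * Pout j)"
      using Pout_nn by (simp add: abs_mult abs_c)
    finally show ?thesis by simp
  qed
  have Pout_nn_int: "ennreal (Pout j) = (\<integral>\<^sup>+ x\<in>{a<..}. ennreal (x ^ j) \<partial>?M)" if "j \<le> m" for j
  proof -
    have "(\<integral>\<^sup>+ x. ennreal (indicator {a<..} x * x ^ j) \<partial>?M) = ennreal (Pout j)"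
      unfolding Pout_def using a0
      by (intro nn_integral_eq_integral intPout[OF that]) (auto simp: indicator_def)
    moreover have "(\<integral>\<^sup>+ x. ennreal (indicator {a<..} x * x ^ j) \<partial>?M) = (\<integral>\<^sup>+ x\<in>{a<..}. ennreal (x ^ j) \<partial>?M)"
      by (intro nn_integral_cong) (auto simp: indicator_def)
    ultimately show ?thesis by simp
  qed
  have R0: "R 0 = 0"
  proof -
    have "(\<Sum>j\<le>m. c j * 0 ^ j) = c 0" for m
      by (induct m) auto
    then show ?thesis by (simp add: R_def c_def)
  qed
  have Gmono: "mono (\<lambda>x. Deltabar r t (x / t) D)"
  proof (rule monoI)
    fix x y :: real assume "x \<le> y"
    then have xy: "x / t \<le> y / t" using assms(9) by (simp add: divide_right_mono)
    show "Deltabar r t (x / t) D \<le> Deltabar r t (y / t) D"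
      unfolding Deltabar_def
      by (intro SUP_mono' SUP_subset_mono) (use xy in auto)
  qed
  have Gmeas: "(\<lambda>x. G x * indicator {0<..a} x) \<in> borel_measurable ?M"
  proof -
    have [measurable]: "(\<lambda>x. Deltabar r t (x / t) D) \<in> borel_measurable borel"
      by (rule mono_ennreal_measurable[OF Gmono])
    have "(\<lambda>x. G x * indicator {0<..a} x) \<in> borel_measurable borel"
      unfolding G_def by measurable
    then show ?thesis by (simp add: measurable_cong_sets[OF sets_interval_measure refl])
  qed
  have IR_bd: "ennreal \<bar>IR\<bar> \<le> ennreal C * (\<integral>\<^sup>+ x\<in>{0<..a}. G x \<partial>?M)"
  proof -
    have "ennreal \<bar>IR\<bar> \<le> (\<integral>\<^sup>+ x. ennreal (norm (indicator {..a} x * R x)) \<partial>?M)"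
      unfolding IR_def using integral_norm_bound_ennreal[OF intR] by simp
    also have "\<dots> \<le> (\<integral>\<^sup>+ x. ennreal C * (G x * indicator {0<..a} x) \<partial>?M)"
    proof (rule nn_integral_mono_AE)
      show "AE x in ?M. ennreal (norm (indicator {..a} x * R x)) \<le> ennreal C * (G x * indicator {0<..a} x)"
        using AEpos
      proof (rule AE_mp, intro AE_I2 impI)
        fix x :: real assume x0: "0 \<le> x"
        show "ennreal (norm (indicator {..a} x * R x)) \<le> ennreal C * (G x * indicator {0<..a} x)"
        proof (cases "x \<in> {0<..a}")
          case True
          then have x: "0 < x" "x \<le> \<eta> * t" by (auto simp: a_def)
          have "(1 - \<eta>) * t \<le> t" using assms(4) assms(9) by (simp add: algebra_simps)
          then have "hderiv m h t \<noteq> 0" using assms(11) by blast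
          from taylor_bound[OF assms(1) assms(2) assms(9) x assms(10) this]
          have "ennreal \<bar>R x\<bar> \<le> ennreal C * G x"
            by (simp add: R_def c_def C_def G_def D_def mult_ac)
          then show ?thesis using True by (simp add: indicator_def)
        next
          case False
          then have "x \<notin> {..a} \<or> x = 0" using x0 by auto
          then show ?thesis using R0 by (auto simp: indicator_def)
        qed
      qed
    qed
    also have "\<dots> = ennreal C * (\<integral>\<^sup>+ x\<in>{0<..a}. G x \<partial>?M)"
      by (rule nn_integral_cmult[OF Gmeas])
    finally show ?thesis .
  qed
  have "ennreal \<bar>T_op K \<eta> h t - L_op K m h t\<bar> \<le> ennreal (\<bar>IR\<bar> + (\<Sum>j\<le>m. \<bar>hderiv j h t\<bar> / fact j * Pout j))"
    using real_bd by (rule ennreal_leI)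
  also have "\<dots> = ennreal \<bar>IR\<bar> + (\<Sum>j\<le>m. ennreal (\<bar>hderiv j h t\<bar> / fact j) * ennreal (Pout j))"
    using Pout_nn by (simp add: ennreal_plus sum_nonneg ennreal_mult[symmetric] sum_ennreal)
  also have "\<dots> \<le> ennreal C * (\<integral>\<^sup>+ x\<in>{0<..a}. G x \<partial>?M)
       + (\<Sum>j\<le>m. ennreal (\<bar>hderiv j h t\<bar> / fact j) * (\<integral>\<^sup>+ x\<in>{a<..}. ennreal (x ^ j) \<partial>?M))"
    using IR_bd Pout_nn_int by (intro add_mono) auto
  finally show ?thesis by (simp add: C_def G_def D_def a_def add.commute)
qed

end
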